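(* Let $f:\mathbb{R}^m\to\mathbb{R}$ be $C^3$, satisfying the Lojasiewicz gradient inequality at each of its critical points, and let $\{x_k\}$ be a sequence constructed by Backtracking New Q-Newton's method (BNQN) with $0<\tau\le1$. For each $k$ with $\nabla f(x_k)\ne0$ let $e_{1,k},\dots,e_{m,k}$ be an orthonormal basis of eigenvectors of $A_k$, and let $\Lambda_k=\{i:\langle\nabla f(x_k),e_{i,k}\rangle\neq0\}$. Assume that whenever a subsequence $\{x_{k_n}\}$ converges, $$\liminf_{n\to\infty}\frac{\min_{i\in\Lambda_{k_n}}\|A_{k_n}e_{i,k_n}\|}{\max_{i\in\Lambda_{k_n}}\|A_{k_n}e_{i,k_n}\|}>0.$$ If $\tau=1$, assume moreover that $\nabla f$ satisfies the Lojasiewicz gradient inequality. Then either $\lim_{k\to\infty}\|x_k\|=\infty$ or $\{x_k\}$ converges to a critical point of $f$.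
   Context: BNQN: fix $m+1$ distinct reals $\delta_0,\dots,\delta_m$, $\tau>0$, $0<\gamma_0<1$, $\kappa=\frac12\min_{i\neq j}|\delta_i-\delta_j|$; $\mathrm{minsp}(A)$ is the minimum absolute value of eigenvalues of a symmetric matrix $A$, and $pr_{A,\pm}$ the orthogonal projections onto the spans of eigenvectors with positive/negative eigenvalues. Given $x_k$: if $\nabla f(x_k)=0$ set $x_{k+1}=x_k$; otherwise let $j$ be the smallest index with $\mathrm{minsp}(\nabla^2 f(x_k)+\delta_j\|\nabla f(x_k)\|^\tau I)\ge\kappa\|\nabla f(x_k)\|^\tau$, $A_k=\nabla^2 f(x_k)+\delta_j\|\nabla f(x_k)\|^\tau I$, $v_k=A_k^{-1}\nabla f(x_k)$, $w_k=pr_{A_k,+}v_k-pr_{A_k,-}v_k$, $\widehat{w_k}=w_k/\max\{1,\|w_k\|\}$, $\gamma_k$ the largest $\gamma\in\{\gamma_03^{-n}:n\ge0\}$ with $f(x_k-\gamma\widehat{w_k})-f(x_k)\le-\gamma\langle\widehat{w_k},\nabla f(x_k)\rangle/3$, and $x_{k+1}=x_k-\gamma_k\widehat{w_k}$. A $C^1$ function $g$ satisfies the Lojasiewicz gradient inequality at $x^*$ if there exist a neighbourhood $U$ of $x^*$, $0<\mu<1$, $C>0$ with $|g(x)-g(x^* )|^\mu\le C\|\nabla g(x)\|$ for all $x\in U$. "$\nabla f$ satisfies the Lojasiewicz gradient inequality" means $F(x,y)=\langle\nabla f(x),y\rangle$ on $\mathbb{R}^{2m}$ satisfies it at every point of $\mathbb{R}^{2m}$.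 *)

theory Defs
  imports "HOL-Analysis.Analysis"
begin

definition grad :: "('a::euclidean_space \<Rightarrow> real) \<Rightarrow> 'a \<Rightarrow> 'a" where
  "grad g x = (\<Sum>b\<in>Basis. frechet_derivative g (at x) b *\<^sub>R b)"

definition hess :: "(real^'m \<Rightarrow> real) \<Rightarrow> real^'m \<Rightarrow> real^'m^'m" where
  "hess f x = (\<chi> i j. frechet_derivative (\<lambda>y. grad f y $ i) (at x) (axis j 1))"

definition C1 :: "('a::euclidean_space \<Rightarrow> real) \<Rightarrow> bool" where
  "C1 g \<longleftrightarrow> (\<forall>x. g differentiable (at x)) \<and>
      (\<forall>b\<in>Basis. continuous_on UNIV (\<lambda>x. frechet_derivative g (at x) b))"

definition C3 :: "(real^'m \<Rightarrow> real) \<Rightarrow> bool" where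
  "C3 f \<longleftrightarrow> C1 f \<and> (\<forall>i. C1 (\<lambda>x. grad f x $ i)) \<and> (\<forall>i j. C1 (\<lambda>x. hess f x $ i $ j))"

definition lojasiewicz_at :: "('a::euclidean_space \<Rightarrow> real) \<Rightarrow> 'a \<Rightarrow> bool" where
  "lojasiewicz_at g xs \<longleftrightarrow> (\<exists>U \<mu> C. open U \<and> xs \<in> U \<and> 0 < \<mu> \<and> \<mu> < 1 \<and> 0 < C \<and>
      (\<forall>x\<in>U. \<bar>g x - g xs\<bar> powr \<mu> \<le> C * norm (grad g x)))"

definition eigenvalues :: "real^'m^'m \<Rightarrow> real set" where
  "eigenvalues A = {l. \<exists>v. v \<noteq> 0 \<and> A *v v = l *\<^sub>R v}"

definition minsp :: "real^'m^'m \<Rightarrow> real" where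
  "minsp A = Min (abs ` eigenvalues A)"

definition eigspan :: "real^'m^'m \<Rightarrow> (real \<Rightarrow> bool) \<Rightarrow> (real^'m) set" where
  "eigspan A P = span {v. \<exists>l. P l \<and> A *v v = l *\<^sub>R v}"

definition orth_proj :: "(real^'m) set \<Rightarrow> real^'m \<Rightarrow> real^'m" where
  "orth_proj S v = (THE p. p \<in> S \<and> (\<forall>s\<in>S. (v - p) \<bullet> s = 0))"

definition bnqn_kappa :: "(nat \<Rightarrow> real) \<Rightarrow> nat \<Rightarrow> real" where
  "bnqn_kappa \<delta> m = (1/2) * Min {\<bar>\<delta> i - \<delta> j\<bar> | i j. i \<le> m \<and> j \<le> m \<and> i \<noteq> j}"

definition bnqn_j :: "(nat \<Rightarrow> real) \<Rightarrow> real \<Rightarrow> (real^'m \<Rightarrow> real) \<Rightarrow> real^'m \<Rightarrow> nat" where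
  "bnqn_j \<delta> \<tau> f x = (LEAST j. j \<le> CARD('m) \<and>
      minsp (hess f x + (\<delta> j * norm (grad f x) powr \<tau>) *\<^sub>R mat 1)
        \<ge> bnqn_kappa \<delta> CARD('m) * norm (grad f x) powr \<tau>)"

definition bnqn_A :: "(nat \<Rightarrow> real) \<Rightarrow> real \<Rightarrow> (real^'m \<Rightarrow> real) \<Rightarrow> real^'m \<Rightarrow> real^'m^'m" where
  "bnqn_A \<delta> \<tau> f x = hess f x + (\<delta> (bnqn_j \<delta> \<tau> f x) * norm (grad f x) powr \<tau>) *\<^sub>R mat 1"

definition bnqn_w :: "(nat \<Rightarrow> real) \<Rightarrow> real \<Rightarrow> (real^'m \<Rightarrow> real) \<Rightarrow> real^'m \<Rightarrow> real^'m" where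
  "bnqn_w \<delta> \<tau> f x =
     (let A = bnqn_A \<delta> \<tau> f x; v = matrix_inv A *v grad f x
      in orth_proj (eigspan A (\<lambda>l. l > 0)) v - orth_proj (eigspan A (\<lambda>l. l < 0)) v)"

definition bnqn_what :: "(nat \<Rightarrow> real) \<Rightarrow> real \<Rightarrow> (real^'m \<Rightarrow> real) \<Rightarrow> real^'m \<Rightarrow> real^'m" where
  "bnqn_what \<delta> \<tau> f x = (let w = bnqn_w \<delta> \<tau> f x in (1 / max 1 (norm w)) *\<^sub>R w)"

text \<open>largest \<gamma> in {\<gamma>0 3^-n} satisfying the Armijo condition = smallest such n\<close>
definition bnqn_gamma :: "(nat \<Rightarrow> real) \<Rightarrow> real \<Rightarrow> real \<Rightarrow> (real^'m \<Rightarrow> real) \<Rightarrow> real^'m \<Rightarrow> real" where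
  "bnqn_gamma \<delta> \<tau> \<gamma>0 f x =
     (let wh = bnqn_what \<delta> \<tau> f x;
          n = (LEAST n. f (x - (\<gamma>0 * (1/3)^n) *\<^sub>R wh) - f x
                          \<le> - (\<gamma>0 * (1/3)^n) * (wh \<bullet> grad f x) / 3)
      in \<gamma>0 * (1/3)^n)"

definition bnqn_step :: "(nat \<Rightarrow> real) \<Rightarrow> real \<Rightarrow> real \<Rightarrow> (real^'m \<Rightarrow> real) \<Rightarrow> real^'m \<Rightarrow> real^'m" where
  "bnqn_step \<delta> \<tau> \<gamma>0 f x =
     (if grad f x = 0 then x else x - bnqn_gamma \<delta> \<tau> \<gamma>0 f x *\<^sub>R bnqn_what \<delta> \<tau> f x)"

end

theory Submission
  imports Defs
begin

lemma orth_expand: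
  fixes e :: "'m::finite \<Rightarrow> real^'m"
  assumes orth: "\<And>i i'. e i \<bullet> e i' = (if i = i' then 1 else 0)"
  shows "v = (\<Sum>i\<in>UNIV. (v \<bullet> e i) *\<^sub>R e i)"
proof -
  have inj: "inj e" using orth by (metis inj_onI one_neq_zero)
  have "pairwise orthogonal (range e)" using orth by (auto simp: pairwise_def orthogonal_def)
  moreover have "0 \<notin> range e" using orth by (metis imageE inner_zero_left zero_neq_one)
  ultimately have ind: "independent (range e)" by (rule pairwise_orthogonal_independent)
  have card: "card (range e) = dim (UNIV :: (real^'m) set)"
    using inj by (simp add: card_image dim_UNIV)
  have sp: "UNIV \<subseteq> span (range e)"
    using card_eq_dim[of "range e" UNIV] card ind by auto
  define u where "u = v - (\<Sum>i\<in>UNIV. (v \<bullet> e i) *\<^sub>R e i)"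
  have "u \<bullet> e j = 0" for j
    unfolding u_def by (simp add: inner_diff_left inner_sum_left orth if_distrib cong: if_cong)
  hence "orthogonal u u" using sp
    by (intro orthogonal_to_span[of u "range e"]) (auto simp: orthogonal_def)
  hence "u = 0" by (simp add: orthogonal_def)
  thus ?thesis by (simp add: u_def)
qed



lemma coef:
  fixes e :: "'m::finite \<Rightarrow> real^'m"
  assumes orth: "\<And>i i'. e i \<bullet> e i' = (if i = i' then 1 else 0)"
  shows "(\<Sum>i\<in>I. a i *\<^sub>R e i) \<bullet> e j = (if j \<in> I then a j else 0)"
  by (simp add: inner_sum_left orth if_distrib cong: if_cong) 

lemma Amul_sum:
  fixes e :: "'m::finite \<Rightarrow> real^'m"
  assumes eig: "\<And>i. A *v e i = lam i *\<^sub>R e i"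
  shows "A *v (\<Sum>i\<in>I. a i *\<^sub>R e i) = (\<Sum>i\<in>I. (a i * lam i) *\<^sub>R e i)"
proof -
  have "A *v (\<Sum>i\<in>I. a i *\<^sub>R e i) = (\<Sum>i\<in>I. A *v (a i *\<^sub>R e i))"
    by (simp add: linear_sum[OF matrix_vector_mul_linear])
  also have "\<dots> = (\<Sum>i\<in>I. (a i * lam i) *\<^sub>R e i)"
    by (simp add: matrix_vector_mult_scaleR eig)
  finally show ?thesis .
qed

lemma eigvec_coef:
  fixes e :: "'m::finite \<Rightarrow> real^'m"
  assumes orth: "\<And>i i'. e i \<bullet> e i' = (if i = i' then 1 else 0)"
    and eig: "\<And>i. A *v e i = lam i *\<^sub>R e i"
    and u: "A *v u = l *\<^sub>R u" and nz: "u \<bullet> e j \<noteq> 0"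
  shows "lam j = l"
proof -
  have ue: "u = (\<Sum>i\<in>UNIV. (u \<bullet> e i) *\<^sub>R e i)" by (rule orth_expand[OF orth])
  have "(A *v u) \<bullet> e j = (u \<bullet> e j) * lam j"
    by (subst ue) (simp add: Amul_sum[OF eig] coef[OF orth])
  moreover have "(A *v u) \<bullet> e j = l * (u \<bullet> e j)" by (simp add: u)
  ultimately show ?thesis using nz by (metis mult.commute mult_cancel_left)
qed

lemma orth_proj_eq:
  assumes S: "subspace S" and p: "p \<in> S" and o: "\<And>s. s \<in> S \<Longrightarrow> (v - p) \<bullet> s = 0"
  shows "orth_proj S v = p"
  unfolding orth_proj_def
proof (rule the_equality)
  show "p \<in> S \<and> (\<forall>s\<in>S. (v - p) \<bullet> s = 0)" using p o by auto
  fix q assume q: "q \<in> S \<and> (\<forall>s\<in>S. (v - q) \<bullet> s = 0)"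
  have d: "p - q \<in> S" using p q S by (simp add: subspace_diff)
  have "(v - q) \<bullet> (p - q) - (v - p) \<bullet> (p - q) = 0" using d q o by auto
  moreover have "(v - q) - (v - p) = p - q" by simp
  ultimately have "(p - q) \<bullet> (p - q) = 0" by (metis inner_diff_left)
  thus "q = p" by simp
qed

lemma orth_proj_eigspan:
  fixes e :: "'m::finite \<Rightarrow> real^'m"
  assumes orth: "\<And>i i'. e i \<bullet> e i' = (if i = i' then 1 else 0)"
    and eig: "\<And>i. A *v e i = lam i *\<^sub>R e i"
  shows "orth_proj (eigspan A Q) v = (\<Sum>i\<in>{i. Q (lam i)}. (v \<bullet> e i) *\<^sub>R e i)"
  unfolding eigspan_def
proof (rule orth_proj_eq)
  show "subspace (span {v. \<exists>l. Q l \<and> A *v v = l *\<^sub>R v})" by simp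
  show "(\<Sum>i\<in>{i. Q (lam i)}. (v \<bullet> e i) *\<^sub>R e i) \<in> span {v. \<exists>l. Q l \<and> A *v v = l *\<^sub>R v}"
    by (intro span_sum span_mul span_base) (auto simp: eig)
  fix s assume s: "s \<in> span {v. \<exists>l. Q l \<and> A *v v = l *\<^sub>R v}"
  have vd: "v - (\<Sum>i\<in>{i. Q (lam i)}. (v \<bullet> e i) *\<^sub>R e i) = (\<Sum>i\<in>{i. \<not> Q (lam i)}. (v \<bullet> e i) *\<^sub>R e i)"
  proof -
    have "v = (\<Sum>i\<in>UNIV. (v \<bullet> e i) *\<^sub>R e i)" by (rule orth_expand[OF orth])
    also have "\<dots> = (\<Sum>i\<in>{i. Q (lam i)}. (v \<bullet> e i) *\<^sub>R e i) + (\<Sum>i\<in>{i. \<not> Q (lam i)}. (v \<bullet> e i) *\<^sub>R e i)"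
    proof -
      have U: "UNIV = {i. Q (lam i)} \<union> {i. \<not> Q (lam i)}" by auto
      show ?thesis by (subst U, rule sum.union_disjoint) auto
    qed
    finally show ?thesis by (simp add: algebra_simps)
  qed
  have "orthogonal (\<Sum>i\<in>{i. \<not> Q (lam i)}. (v \<bullet> e i) *\<^sub>R e i) s"
  proof (rule orthogonal_to_span[OF s])
    fix y assume "y \<in> {v. \<exists>l. Q l \<and> A *v v = l *\<^sub>R v}"
    then obtain l where l: "Q l" "A *v y = l *\<^sub>R y" by auto
    have "y \<bullet> e i = 0" if "\<not> Q (lam i)" for i
      using eigvec_coef[OF orth eig l(2), of i] l(1) that by auto
    hence "y \<bullet> (\<Sum>i | \<not> Q (lam i). (v \<bullet> e i) *\<^sub>R e i) = 0"
      by (simp add: inner_sum_right)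
    thus "orthogonal (\<Sum>i\<in>{i. \<not> Q (lam i)}. (v \<bullet> e i) *\<^sub>R e i) y"
      by (simp add: orthogonal_def inner_commute)
  qed
  thus "(v - (\<Sum>i\<in>{i. Q (lam i)}. (v \<bullet> e i) *\<^sub>R e i)) \<bullet> s = 0" by (simp add: vd orthogonal_def)
qed

lemma spectral_w:
  fixes e :: "'m::finite \<Rightarrow> real^'m"
  assumes orth: "\<And>i i'. e i \<bullet> e i' = (if i = i' then 1 else 0)"
    and eig: "\<And>i. A *v e i = lam i *\<^sub>R e i"
    and nz: "\<And>i. lam i \<noteq> 0"
  shows "orth_proj (eigspan A (\<lambda>l. l > 0)) (matrix_inv A *v g) - orth_proj (eigspan A (\<lambda>l. l < 0)) (matrix_inv A *v g)
       = (\<Sum>i\<in>UNIV. (g \<bullet> e i / \<bar>lam i\<bar>) *\<^sub>R e i)"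
proof -
  define u0 where "u0 = (\<Sum>i\<in>UNIV. (g \<bullet> e i / lam i) *\<^sub>R e i)"
  have Au0: "A *v u0 = g"
    unfolding u0_def using nz by (simp add: Amul_sum[OF eig] orth_expand[OF orth, symmetric])
  have inj: "inj ((*v) A)"
  proof (rule injI)
    fix x y assume xy: "A *v x = A *v y"
    define d where "d = x - y"
    have Ad: "A *v d = 0" using xy by (simp add: d_def matrix_vector_mult_diff_distrib)
    have "d \<bullet> e j = 0" for j
    proof -
      have "(A *v d) \<bullet> e j = (d \<bullet> e j) * lam j"
        by (subst orth_expand[OF orth, of d]) (simp add: Amul_sum[OF eig] coef[OF orth])
      thus ?thesis using Ad nz[of j] by simp
    qed
    hence "d = 0" by (subst orth_expand[OF orth]) simp
    thus "x = y" by (simp add: d_def)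
  qed
  hence "invertible A" by (simp add: invertible_left_inverse matrix_left_invertible_injective)
  hence "matrix_inv A ** A = mat 1" unfolding invertible_def matrix_inv_def by (rule someI_ex[THEN conjunct2])
  hence v: "matrix_inv A *v g = u0"
    by (metis Au0 matrix_vector_mul_assoc matrix_vector_mul_lid)
  have cv: "u0 \<bullet> e i = g \<bullet> e i / lam i" for i unfolding u0_def by (simp add: coef[OF orth])
  have "(\<Sum>i\<in>{i. lam i > 0}. (u0 \<bullet> e i) *\<^sub>R e i) - (\<Sum>i\<in>{i. lam i < 0}. (u0 \<bullet> e i) *\<^sub>R e i)
        = (\<Sum>i\<in>UNIV. if lam i > 0 then (u0 \<bullet> e i) *\<^sub>R e i else 0) - (\<Sum>i\<in>UNIV. if lam i < 0 then (u0 \<bullet> e i) *\<^sub>R e i else 0)"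
    by (simp add: sum.inter_filter[symmetric])
  also have "\<dots> = (\<Sum>i\<in>UNIV. (g \<bullet> e i / \<bar>lam i\<bar>) *\<^sub>R e i)"
    unfolding sum_subtractf[symmetric]
    by (rule sum.cong) (use nz in \<open>auto simp: cv scaleR_diff_left[symmetric] abs_if\<close>)
  finally show ?thesis
    by (simp add: orth_proj_eigspan[OF orth eig] v)
qed



lemma kappa_set_eq: fixes \<delta> :: "nat \<Rightarrow> real" shows "{\<bar>\<delta> i - \<delta> j\<bar> | i j. i \<le> m \<and> j \<le> m \<and> i \<noteq> j} =
   (\<lambda>(i,j). \<bar>\<delta> i - \<delta> j\<bar>) ` {p. fst p \<le> m \<and> snd p \<le> m \<and> fst p \<noteq> snd p}"
  by force

lemma kappa_fin: fixes \<delta> :: "nat \<Rightarrow> real" shows "finite {\<bar>\<delta> i - \<delta> j\<bar> | i j. i \<le> m \<and> j \<le> m \<and> i \<noteq> j}"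
proof -
  have "{p::nat\<times>nat. fst p \<le> m \<and> snd p \<le> m \<and> fst p \<noteq> snd p} \<subseteq> {..m} \<times> {..m}" by auto
  hence "finite {p::nat\<times>nat. fst p \<le> m \<and> snd p \<le> m \<and> fst p \<noteq> snd p}" by (rule finite_subset) auto
  thus ?thesis unfolding kappa_set_eq by simp
qed

lemma kappa_le:
  assumes "i \<le> m" "j \<le> m" "i \<noteq> j"
  shows "2 * bnqn_kappa \<delta> m \<le> \<bar>\<delta> i - \<delta> j\<bar>"
proof -
  have "Min {\<bar>\<delta> i - \<delta> j\<bar> | i j. i \<le> m \<and> j \<le> m \<and> i \<noteq> j} \<le> \<bar>\<delta> i - \<delta> j\<bar>"
    by (rule Min_le[OF kappa_fin]) (use assms in blast)
  thus ?thesis by (simp add: bnqn_kappa_def)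
qed

lemma kappa_pos:
  assumes "inj_on \<delta> {0..m}" "1 \<le> m"
  shows "0 < bnqn_kappa \<delta> m"
proof -
  have ne: "{\<bar>\<delta> i - \<delta> j\<bar> | i j. i \<le> m \<and> j \<le> m \<and> i \<noteq> j} \<noteq> {}"
    using assms(2) by blast
  have "0 < Min {\<bar>\<delta> i - \<delta> j\<bar> | i j. i \<le> m \<and> j \<le> m \<and> i \<noteq> j}"
    using assms(1) by (subst Min_gr_iff[OF kappa_fin ne]) (auto simp: inj_on_def)
  thus ?thesis by (simp add: bnqn_kappa_def)
qed

lemma shift_mul: "(M + c *\<^sub>R mat 1) *v v = M *v v + c *\<^sub>R (v::real^'m)"
  by (simp add: matrix_vector_mult_add_rdistrib scaleR_matrix_vector_assoc[symmetric])

lemma eigenvalues_shift: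
  fixes e :: "'m::finite \<Rightarrow> real^'m" and H :: "real^'m^'m"
  assumes orth: "\<And>i i'. e i \<bullet> e i' = (if i = i' then 1 else 0)"
    and eig: "\<And>i. (H + c0 *\<^sub>R mat 1) *v e i = lam i *\<^sub>R e i"
  shows "eigenvalues (H + t *\<^sub>R mat 1) = (\<lambda>i. lam i - c0 + t) ` UNIV"
proof
  show "eigenvalues (H + t *\<^sub>R mat 1) \<subseteq> range (\<lambda>i. lam i - c0 + t)"
  proof
    fix \<mu> assume "\<mu> \<in> eigenvalues (H + t *\<^sub>R mat 1)"
    then obtain v where v: "v \<noteq> 0" "(H + t *\<^sub>R mat 1) *v v = \<mu> *\<^sub>R v" by (auto simp: eigenvalues_def)
    have "(H + c0 *\<^sub>R mat 1) *v v = (\<mu> - t + c0) *\<^sub>R v"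
      using v(2) unfolding shift_mul by (simp add: algebra_simps)
    moreover obtain j where "v \<bullet> e j \<noteq> 0"
    proof (rule ccontr)
      assume "\<not> thesis"
      hence "\<forall>j. v \<bullet> e j = 0" using that by blast
      hence "v = 0" by (subst orth_expand[OF orth]) simp
      thus False using v by simp
    qed
    ultimately have "lam j = \<mu> - t + c0" using eigvec_coef[OF orth eig] by blast
    thus "\<mu> \<in> range (\<lambda>i. lam i - c0 + t)" by (auto intro!: image_eqI[of _ _ j])
  qed
next
  show "range (\<lambda>i. lam i - c0 + t) \<subseteq> eigenvalues (H + t *\<^sub>R mat 1)"
  proof safe
    fix i
    have "e i \<noteq> 0" using orth[of i i] by auto
    moreover have "(H + t *\<^sub>R mat 1) *v e i = (lam i - c0 + t) *\<^sub>R e i"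
      using eig[of i] unfolding shift_mul by (simp add: algebra_simps)
    ultimately show "lam i - c0 + t \<in> eigenvalues (H + t *\<^sub>R mat 1)" by (auto simp: eigenvalues_def)
  qed
qed

lemma minsp_shift:
  fixes e :: "'m::finite \<Rightarrow> real^'m" and H :: "real^'m^'m"
  assumes orth: "\<And>i i'. e i \<bullet> e i' = (if i = i' then 1 else 0)"
    and eig: "\<And>i. (H + c0 *\<^sub>R mat 1) *v e i = lam i *\<^sub>R e i"
  shows "minsp (H + t *\<^sub>R mat 1) = Min (range (\<lambda>i. \<bar>lam i - c0 + t\<bar>))"
  unfolding minsp_def eigenvalues_shift[OF orth eig] by (simp add: image_image)

lemma bnqn_eig:
  fixes f :: "real^'m::finite \<Rightarrow> real" and e :: "'m \<Rightarrow> real^'m"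
  assumes dinj: "inj_on \<delta> {0..CARD('m)}" and g: "grad f x \<noteq> 0"
    and orth: "\<And>i i'. e i \<bullet> e i' = (if i = i' then 1 else 0)"
    and eig: "\<And>i. bnqn_A \<delta> \<tau> f x *v e i = lam i *\<^sub>R e i"
  shows "bnqn_j \<delta> \<tau> f x \<le> CARD('m)"
    and "\<And>i. bnqn_kappa \<delta> CARD('m) * norm (grad f x) powr \<tau> \<le> \<bar>lam i\<bar>"
proof -
  define m where "m = CARD('m)"
  define s where "s = norm (grad f x) powr \<tau>"
  define \<kappa> where "\<kappa> = bnqn_kappa \<delta> m"
  define H where "H = hess f x"
  define j0 where "j0 = bnqn_j \<delta> \<tau> f x"
  define c0 where "c0 = \<delta> j0 * s"
  have s: "s > 0" using g by (simp add: s_def)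
  have m1: "1 \<le> m" by (simp add: m_def Suc_le_eq)
  have kp: "\<kappa> > 0" unfolding \<kappa>_def using kappa_pos[OF _ m1] dinj by (simp add: m_def)
  have eig': "\<And>i. (H + c0 *\<^sub>R mat 1) *v e i = lam i *\<^sub>R e i"
    using eig by (simp add: bnqn_A_def H_def c0_def j0_def s_def)
  have ms: "\<And>t. minsp (hess f x + t *\<^sub>R mat 1) = Min (range (\<lambda>i. \<bar>lam i - c0 + t\<bar>))"
    using minsp_shift[OF orth eig'] unfolding H_def .
  define P where "P j \<longleftrightarrow> j \<le> m \<and> minsp (hess f x + (\<delta> j * s) *\<^sub>R mat 1) \<ge> \<kappa> * s" for j
  have j0def: "j0 = (LEAST j. P j)"
    by (simp add: j0_def bnqn_j_def P_def m_def s_def \<kappa>_def)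
  define Bad where "Bad = (\<Union>i. {j\<in>{0..m}. \<bar>lam i - c0 + \<delta> j * s\<bar> < \<kappa> * s})"
  have c1: "card {j\<in>{0..m}. \<bar>lam i - c0 + \<delta> j * s\<bar> < \<kappa> * s} \<le> 1" for i
  proof -
    have "a = b" if a: "a \<in> {j\<in>{0..m}. \<bar>lam i - c0 + \<delta> j * s\<bar> < \<kappa> * s}"
        and b: "b \<in> {j\<in>{0..m}. \<bar>lam i - c0 + \<delta> j * s\<bar> < \<kappa> * s}" for a b
    proof (rule ccontr)
      assume ab: "a \<noteq> b"
      have "2 * \<kappa> \<le> \<bar>\<delta> a - \<delta> b\<bar>" using kappa_le[of a m b \<delta>] a b ab by (simp add: \<kappa>_def)
      hence "2 * \<kappa> * s \<le> \<bar>\<delta> a - \<delta> b\<bar> * s" using s by simp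
      also have "\<dots> = \<bar>(\<delta> a - \<delta> b) * s\<bar>"
        using s by (simp add: abs_mult)
      also have "\<dots> = \<bar>(lam i - c0 + \<delta> a * s) - (lam i - c0 + \<delta> b * s)\<bar>"
        by (simp add: algebra_simps)
      also have "\<dots> < 2 * \<kappa> * s" using a b by auto
      finally show False by simp
    qed
    thus ?thesis by (simp add: card_le_Suc0_iff_eq)
  qed
  have "card Bad \<le> (\<Sum>i\<in>(UNIV::'m set). card {j\<in>{0..m}. \<bar>lam i - c0 + \<delta> j * s\<bar> < \<kappa> * s})"
    unfolding Bad_def by (rule card_UN_le) simp
  also have "\<dots> \<le> (\<Sum>i\<in>(UNIV::'m set). 1)" by (rule sum_mono) (rule c1)
  also have "\<dots> = m" by (simp add: m_def)
  finally have cB: "card Bad < card {0..m}" by simp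
  have fB: "finite Bad" by (simp add: Bad_def)
  have "\<not> {0..m} \<subseteq> Bad"
  proof
    assume "{0..m} \<subseteq> Bad"
    hence "card {0..m} \<le> card Bad" by (rule card_mono[OF fB])
    thus False using cB by simp
  qed
  then obtain j where j0': "j \<in> {0..m}" "j \<notin> Bad" by blast
  hence j: "j \<le> m" "j \<notin> Bad" by auto
  have "P j"
  proof -
    have "\<forall>i. \<kappa> * s \<le> \<bar>lam i - c0 + \<delta> j * s\<bar>" using j by (auto simp: Bad_def not_less)
    hence "\<kappa> * s \<le> Min (range (\<lambda>i. \<bar>lam i - c0 + \<delta> j * s\<bar>))" by (simp add: Min_ge_iff)
    thus ?thesis using j(1) by (simp add: P_def ms)
  qed
  hence Pj0: "P j0" unfolding j0def by (rule LeastI)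
  thus "bnqn_j \<delta> \<tau> f x \<le> CARD('m)" by (simp add: P_def j0_def m_def)
  fix i
  have "\<kappa> * s \<le> Min (range (\<lambda>i. \<bar>lam i - c0 + \<delta> j0 * s\<bar>))"
    using Pj0 by (simp add: P_def ms)
  also have "\<dots> \<le> \<bar>lam i - c0 + \<delta> j0 * s\<bar>" by (rule Min_le) auto
  finally show "bnqn_kappa \<delta> CARD('m) * norm (grad f x) powr \<tau> \<le> \<bar>lam i\<bar>"
    by (simp add: \<kappa>_def m_def s_def c0_def)
qed



lemma C1_deriv:
  fixes f :: "'a::euclidean_space \<Rightarrow> real"
  assumes "C1 f"
  shows "(f has_derivative (\<lambda>h. grad f x \<bullet> h)) (at x)"
proof -
  have d: "(f has_derivative frechet_derivative f (at x)) (at x)"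
    using assms by (simp add: C1_def frechet_derivative_works)
  hence lin: "linear (frechet_derivative f (at x))" by (simp add: has_derivative_linear)
  have "frechet_derivative f (at x) h = grad f x \<bullet> h" for h
  proof -
    have "frechet_derivative f (at x) h = frechet_derivative f (at x) (\<Sum>b\<in>Basis. (h \<bullet> b) *\<^sub>R b)"
      by (simp add: euclidean_representation)
    also have "\<dots> = (\<Sum>b\<in>Basis. (h \<bullet> b) * frechet_derivative f (at x) b)"
      by (simp add: linear_sum[OF lin] linear_scale[OF lin])
    also have "\<dots> = grad f x \<bullet> h"
      by (auto simp: grad_def inner_sum_right inner_commute intro!: sum.cong)
    finally show ?thesis .
  qed
  thus ?thesis using d by (metis (no_types, lifting) ext)
qed

lemma C1_grad_cont:
  fixes f :: "'a::euclidean_space \<Rightarrow> real"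
  assumes "C1 f"
  shows "continuous_on UNIV (grad f)"
proof -
  have "continuous_on UNIV (\<lambda>x. \<Sum>b\<in>Basis. frechet_derivative f (at x) b *\<^sub>R b)"
    using assms unfolding C1_def by (intro continuous_intros) auto
  thus ?thesis by (simp add: grad_def[abs_def])
qed

lemma C1_cont:
  fixes f :: "'a::euclidean_space \<Rightarrow> real"
  assumes "C1 f"
  shows "continuous_on UNIV f"
  using assms unfolding C1_def
  by (meson continuous_at_imp_continuous_on differentiable_imp_continuous_within)

lemma C3_C1: "C3 f \<Longrightarrow> C1 f" by (simp add: C3_def)

lemma C3_hess_cont: "C3 f \<Longrightarrow> continuous_on UNIV (\<lambda>x. hess f x $ i $ j)"
  unfolding C3_def using C1_cont by blast

lemma armijo_mvt:
  fixes f :: "'a::euclidean_space \<Rightarrow> real"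
  assumes C1: "C1 f" and eps: "\<And>y. y \<in> cball x r \<Longrightarrow> norm (grad f y - grad f x) \<le> \<epsilon>"
    and u: "norm u \<le> 1" and \<gamma>: "0 \<le> \<gamma>" "\<gamma> \<le> r"
  shows "f (x - \<gamma> *\<^sub>R u) - f x \<le> - \<gamma> * (u \<bullet> grad f x) + \<gamma> * \<epsilon>"
proof -
  define h where "h t = f (x - t *\<^sub>R u)" for t
  have hd: "(h has_derivative (\<lambda>d. grad f (x - t *\<^sub>R u) \<bullet> (- d *\<^sub>R u))) (at t within {0..\<gamma>})" for t
  proof -
    have a: "((\<lambda>t. x - t *\<^sub>R u) has_derivative (\<lambda>d. - d *\<^sub>R u)) (at t within {0..\<gamma>})"
      by (auto intro!: derivative_eq_intros)
    have b: "(f has_derivative (\<lambda>h. grad f (x - t *\<^sub>R u) \<bullet> h)) (at (x - t *\<^sub>R u))"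
      by (rule C1_deriv[OF C1])
    show ?thesis unfolding h_def
      by (rule has_derivative_compose[OF a b])
  qed
  obtain t where t: "t \<in> {0..\<gamma>}" "h \<gamma> - h 0 = grad f (x - t *\<^sub>R u) \<bullet> (- \<gamma> *\<^sub>R u)"
    using mvt_very_simple[OF \<gamma>(1) hd] by auto
  have "norm ((x - t *\<^sub>R u) - x) \<le> r"
    using t(1) u \<gamma> by (auto intro: order_trans[OF mult_left_le[of "norm u" t]])
  hence ey: "norm (grad f (x - t *\<^sub>R u) - grad f x) \<le> \<epsilon>"
    by (intro eps) (simp add: dist_norm norm_minus_commute)
  have "u \<bullet> (grad f x - grad f (x - t *\<^sub>R u)) \<le> norm u * norm (grad f x - grad f (x - t *\<^sub>R u))"
    by (rule norm_cauchy_schwarz)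
  also have "\<dots> \<le> 1 * \<epsilon>" using ey u
    by (intro mult_mono) (auto simp: norm_minus_commute)
  finally have cs: "u \<bullet> (grad f x - grad f (x - t *\<^sub>R u)) \<le> \<epsilon>" by simp
  have "f (x - \<gamma> *\<^sub>R u) - f x = - \<gamma> * (u \<bullet> grad f (x - t *\<^sub>R u))"
    using t(2) by (simp add: h_def inner_commute)
  also have "\<dots> = - \<gamma> * (u \<bullet> grad f x) + \<gamma> * (u \<bullet> (grad f x - grad f (x - t *\<^sub>R u)))"
    by (simp add: inner_diff_right algebra_simps)
  also have "\<dots> \<le> - \<gamma> * (u \<bullet> grad f x) + \<gamma> * \<epsilon>"
    using cs \<gamma>(1) by (simp add: mult_left_mono)
  finally show ?thesis .
qed

lemma gamma_props:
  fixes f :: "real^'m::finite \<Rightarrow> real"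
  assumes g0: "0 < \<gamma>0" and N: "\<gamma>0 * (1/3)^N \<le> r"
    and arm: "\<And>\<gamma>. 0 < \<gamma> \<Longrightarrow> \<gamma> \<le> r \<Longrightarrow>
        f (x - \<gamma> *\<^sub>R bnqn_what \<delta> \<tau> f x) - f x \<le> - \<gamma> * (bnqn_what \<delta> \<tau> f x \<bullet> grad f x) / 3"
  shows "\<gamma>0 * (1/3)^N \<le> bnqn_gamma \<delta> \<tau> \<gamma>0 f x"
    and "f (x - bnqn_gamma \<delta> \<tau> \<gamma>0 f x *\<^sub>R bnqn_what \<delta> \<tau> f x) - f x
           \<le> - bnqn_gamma \<delta> \<tau> \<gamma>0 f x * (bnqn_what \<delta> \<tau> f x \<bullet> grad f x) / 3"
    and "0 < bnqn_gamma \<delta> \<tau> \<gamma>0 f x"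
proof -
  define wh where "wh = bnqn_what \<delta> \<tau> f x"
  define Q where "Q n \<longleftrightarrow> f (x - (\<gamma>0 * (1/3)^n) *\<^sub>R wh) - f x \<le> - (\<gamma>0 * (1/3)^n) * (wh \<bullet> grad f x) / 3" for n
  define n0 where "n0 = (LEAST n. Q n)"
  have gam: "bnqn_gamma \<delta> \<tau> \<gamma>0 f x = \<gamma>0 * (1/3)^n0"
    by (simp add: bnqn_gamma_def Let_def n0_def Q_def wh_def)
  have QN: "Q N" unfolding Q_def wh_def using g0 N by (intro arm) auto
  have "n0 \<le> N" unfolding n0_def by (rule Least_le[where P=Q, OF QN])
  hence "(1/3::real)^N \<le> (1/3)^n0" by (rule power_decreasing) auto
  thus "\<gamma>0 * (1/3)^N \<le> bnqn_gamma \<delta> \<tau> \<gamma>0 f x" using g0 by (simp add: gam)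
  have "Q n0" unfolding n0_def by (rule LeastI[where P=Q, OF QN])
  thus "f (x - bnqn_gamma \<delta> \<tau> \<gamma>0 f x *\<^sub>R bnqn_what \<delta> \<tau> f x) - f x
           \<le> - bnqn_gamma \<delta> \<tau> \<gamma>0 f x * (bnqn_what \<delta> \<tau> f x \<bullet> grad f x) / 3"
    by (simp add: Q_def gam wh_def)
  show "0 < bnqn_gamma \<delta> \<tau> \<gamma>0 f x" using g0 by (simp add: gam)
qed

lemma exists_N:
  assumes "0 < r" "0 < \<gamma>0" shows "\<exists>N. \<gamma>0 * (1/3::real)^N \<le> r"
proof -
  obtain N where "(1/3::real)^N < r / \<gamma>0" using real_arch_pow_inv[of "r/\<gamma>0" "1/3"] assms by auto
  thus ?thesis using assms by (intro exI[of _ N]) (simp add: field_simps)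
qed



lemma orth_norms:
  fixes e :: "'m::finite \<Rightarrow> real^'m"
    and g :: "real^'m" and lam :: "'m \<Rightarrow> real"
  assumes orth: "\<And>i i'. e i \<bullet> e i' = (if i = i' then 1 else 0)"
  defines "w \<equiv> (\<Sum>i\<in>UNIV. (g \<bullet> e i / \<bar>lam i\<bar>) *\<^sub>R e i)"
  shows "norm g ^ 2 = (\<Sum>i\<in>UNIV. (g \<bullet> e i)^2)"
    and "w \<bullet> g = (\<Sum>i\<in>UNIV. (g \<bullet> e i)^2 / \<bar>lam i\<bar>)"
    and "norm w ^ 2 = (\<Sum>i\<in>UNIV. (g \<bullet> e i)^2 / (lam i)^2)"
proof -
  have ge: "g = (\<Sum>i\<in>UNIV. (g \<bullet> e i) *\<^sub>R e i)" by (rule orth_expand[OF orth])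
  have "g \<bullet> g = (\<Sum>i\<in>UNIV. (g \<bullet> e i) * (g \<bullet> e i))"
    by (subst (1) ge) (simp add: inner_sum_left inner_commute[of "e _" g])
  thus "norm g ^ 2 = (\<Sum>i\<in>UNIV. (g \<bullet> e i)^2)" by (simp add: power2_norm_eq_inner[symmetric] power2_eq_square)
  show "w \<bullet> g = (\<Sum>i\<in>UNIV. (g \<bullet> e i)^2 / \<bar>lam i\<bar>)"
    unfolding w_def by (simp add: inner_sum_left inner_commute[of "e _" g] power2_eq_square)
  have "w \<bullet> w = (\<Sum>i\<in>UNIV. (g \<bullet> e i / \<bar>lam i\<bar>) * (w \<bullet> e i))"
    by (subst (1) w_def) (simp add: inner_sum_left inner_commute[of "e _" w])
  also have "\<dots> = (\<Sum>i\<in>UNIV. (g \<bullet> e i)^2 / (lam i)^2)"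
    unfolding w_def by (simp add: coef[OF orth] power2_eq_square)
  finally show "norm w ^ 2 = (\<Sum>i\<in>UNIV. (g \<bullet> e i)^2 / (lam i)^2)" by (simp add: power2_norm_eq_inner)
qed

lemma orth_bounds:
  fixes e :: "'m::finite \<Rightarrow> real^'m"
    and g :: "real^'m" and lam :: "'m \<Rightarrow> real"
  assumes orth: "\<And>i i'. e i \<bullet> e i' = (if i = i' then 1 else 0)"
    and nz: "\<And>i. lam i \<noteq> 0"
  defines "w \<equiv> (\<Sum>i\<in>UNIV. (g \<bullet> e i / \<bar>lam i\<bar>) *\<^sub>R e i)"
  shows "\<lbrakk>0 < M; \<And>i. g \<bullet> e i \<noteq> 0 \<Longrightarrow> \<bar>lam i\<bar> \<le> M\<rbrakk> \<Longrightarrow> norm g ^ 2 / M \<le> w \<bullet> g"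
    and "\<lbrakk>0 < L; \<And>i. g \<bullet> e i \<noteq> 0 \<Longrightarrow> L \<le> \<bar>lam i\<bar>\<rbrakk> \<Longrightarrow> norm w \<le> norm g / L"
proof -
  assume M: "0 < M" "\<And>i. g \<bullet> e i \<noteq> 0 \<Longrightarrow> \<bar>lam i\<bar> \<le> M"
  have "norm g ^ 2 / M = (\<Sum>i\<in>UNIV. (g \<bullet> e i)^2 / M)"
    by (simp add: orth_norms(1)[OF orth] sum_divide_distrib)
  also have "\<dots> \<le> (\<Sum>i\<in>UNIV. (g \<bullet> e i)^2 / \<bar>lam i\<bar>)"
  proof (rule sum_mono)
    fix i show "(g \<bullet> e i)^2 / M \<le> (g \<bullet> e i)^2 / \<bar>lam i\<bar>"
    proof (cases "g \<bullet> e i = 0")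
      case False thus ?thesis using M(2)[OF False] nz[of i]
        by (intro divide_left_mono) auto
    qed simp
  qed
  also have "\<dots> = w \<bullet> g" unfolding w_def by (simp add: orth_norms(2)[OF orth])
  finally show "norm g ^ 2 / M \<le> w \<bullet> g" .
next
  assume L: "0 < L" "\<And>i. g \<bullet> e i \<noteq> 0 \<Longrightarrow> L \<le> \<bar>lam i\<bar>"
  have "norm w ^ 2 = (\<Sum>i\<in>UNIV. (g \<bullet> e i)^2 / (lam i)^2)" unfolding w_def by (simp add: orth_norms(3)[OF orth])
  also have "\<dots> \<le> (\<Sum>i\<in>UNIV. (g \<bullet> e i)^2 / L^2)"
  proof (rule sum_mono)
    fix i show "(g \<bullet> e i)^2 / (lam i)^2 \<le> (g \<bullet> e i)^2 / L^2"
    proof (cases "g \<bullet> e i = 0")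
      case False
      have "L^2 \<le> (lam i)^2" using L(2)[OF False] L(1)
        by (metis abs_ge_zero power2_abs power_mono less_imp_le)
      moreover have "0 < (lam i)^2" using nz[of i] by simp
      ultimately show ?thesis using L(1) by (intro divide_left_mono) auto
    qed simp
  qed
  also have "\<dots> = (norm g / L)^2" by (simp add: orth_norms(1)[OF orth] sum_divide_distrib power_divide)
  finally show "norm w \<le> norm g / L" using L(1)
    by (meson divide_nonneg_pos norm_ge_zero power2_le_imp_le)
qed



lemma pow_concave:
  fixes t q :: real
  assumes t: "0 \<le> t" and q: "0 < q" "q < 1"
  shows "t powr q \<le> 1 - q + q * t"
proof (cases "t = 0")
  case True thus ?thesis using q by simp
next
  case False
  hence tp: "0 < t" using t by simp
  have "(1 - q) * ln 1 + q * ln t \<le> ln ((1 - q) *\<^sub>R 1 + q *\<^sub>R t)"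
    by (rule concave_onD[OF ln_concave]) (use q tp in auto)
  hence "q * ln t \<le> ln (1 - q + q * t)" by simp
  moreover have "0 < 1 - q + q * t" using q tp by (simp add: add_pos_nonneg)
  ultimately have "exp (q * ln t) \<le> 1 - q + q * t"
    by (metis exp_le_cancel_iff exp_ln)
  thus ?thesis using tp by (simp add: powr_def)
qed

lemma powr_diff_ge:
  fixes a b q :: real
  assumes b: "0 \<le> b" "b \<le> a" and a: "0 < a" and q: "0 < q" "q < 1"
  shows "q * (a - b) / a powr (1 - q) \<le> a powr q - b powr q"
proof -
  have "(b / a) powr q \<le> 1 - q + q * (b / a)" using b a q by (intro pow_concave) auto
  hence "b powr q / a powr q \<le> 1 - q + q * (b / a)" using b a by (simp add: powr_divide)
  hence "b powr q \<le> a powr q * (1 - q + q * (b / a))" using a by (simp add: divide_le_eq mult.commute)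
  hence "q * (a powr q - a powr q * (b / a)) \<le> a powr q - b powr q" by (simp add: algebra_simps)
  moreover have "a powr q - a powr q * (b / a) = (a - b) / a powr (1 - q)"
    using a by (simp add: powr_diff field_simps)
  ultimately show ?thesis by simp
qed

lemma absil_abstract:
  fixes x :: "nat \<Rightarrow> 'a::real_normed_vector" and V :: "nat \<Rightarrow> real"
  assumes Vnn: "\<And>k. 0 \<le> V k" and Vdec: "\<And>k. V (Suc k) \<le> V k"
    and phimono: "\<And>s t. 0 \<le> s \<Longrightarrow> s \<le> t \<Longrightarrow> \<phi> s \<le> \<phi> t"
    and phinn: "\<And>s. 0 \<le> s \<Longrightarrow> 0 \<le> \<phi> s"
    and step: "\<And>k. K \<le> k \<Longrightarrow> dist (x k) p < R \<Longrightarrow> norm (x (Suc k) - x k) \<le> c * (\<phi> (V k) - \<phi> (V (Suc k)))"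
    and start: "dist (x K) p + c * \<phi> (V K) < R" and c: "0 < c"
  shows "summable (\<lambda>k. norm (x (Suc k) - x k))"
proof -
  define S where "S n = (\<Sum>i<n. norm (x (Suc (K + i)) - x (K + i)))" for n
  have main: "S n \<le> c * (\<phi> (V K) - \<phi> (V (K + n))) \<and> dist (x (K + n)) p \<le> dist (x K) p + S n" for n
  proof (induction n)
    case 0 thus ?case by (simp add: S_def)
  next
    case (Suc n)
    have "\<phi> (V (K + n)) \<ge> 0" using phinn Vnn by auto
    hence "dist (x (K + n)) p < R" using Suc c start by (smt (verit, best) mult_left_mono)
    hence st: "norm (x (Suc (K + n)) - x (K + n)) \<le> c * (\<phi> (V (K + n)) - \<phi> (V (Suc (K + n))))"
      by (intro step) auto
    have SS: "S (Suc n) = S n + norm (x (Suc (K + n)) - x (K + n))" by (simp add: S_def)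
    hence 1: "S (Suc n) \<le> c * (\<phi> (V K) - \<phi> (V (K + Suc n)))"
      using Suc st by (simp add: algebra_simps)
    have "dist (x (K + Suc n)) p \<le> dist (x (K + n)) p + norm (x (Suc (K + n)) - x (K + n))"
      using dist_triangle[of "x (K + Suc n)" p "x (K+n)"] by (simp add: dist_norm add.commute)
    hence 2: "dist (x (K + Suc n)) p \<le> dist (x K) p + S (Suc n)"
      using Suc SS by simp
    show ?case using 1 2 by simp
  qed
  have "S n \<le> c * \<phi> (V K)" for n
    using main[of n] phinn[OF Vnn[of "K + n"]] c by (smt (verit) mult_left_mono)
  hence "summable (\<lambda>i. norm (x (Suc (K + i)) - x (K + i)))"
    by (intro summableI_nonneg_bounded[where x="c * \<phi> (V K)"]) (auto simp: S_def)
  hence "summable (\<lambda>i. norm (x (Suc (i + K)) - x (i + K)))" by (simp add: add.commute)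
  thus ?thesis by (subst summable_iff_shift[symmetric, of _ K]) simp
qed

lemma summable_diff_convergent:
  fixes x :: "nat \<Rightarrow> 'a::banach"
  assumes "summable (\<lambda>k. norm (x (Suc k) - x k))"
  shows "convergent x"
proof -
  have s: "summable (\<lambda>k. x (Suc k) - x k)" using assms by (rule summable_norm_cancel)
  have "(\<lambda>n. \<Sum>i<n. x (Suc i) - x i) \<longlonglongrightarrow> (\<Sum>i. x (Suc i) - x i)"
    using s by (rule summable_LIMSEQ)
  hence "(\<lambda>n. x 0 + (\<Sum>i<n. x (Suc i) - x i)) \<longlonglongrightarrow> x 0 + (\<Sum>i. x (Suc i) - x i)"
    by (intro tendsto_add) auto
  moreover have "x 0 + (\<Sum>i<n. x (Suc i) - x i) = x n" for n
    by (simp add: sum_lessThan_telescope)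
  ultimately show ?thesis by (auto simp: convergent_def)
qed



lemma hess_bound:
  fixes H :: "real^'m::finite^'m"
  shows "norm (H *v u) \<le> (\<Sum>i\<in>UNIV. \<Sum>j\<in>UNIV. \<bar>H$i$j\<bar>) * norm u"
proof -
  have "norm (H *v u) \<le> (\<Sum>i\<in>UNIV. \<bar>(H *v u)$i\<bar>)" by (rule norm_le_l1_cart)
  also have "\<dots> \<le> (\<Sum>i\<in>UNIV. (\<Sum>j\<in>UNIV. \<bar>H$i$j\<bar>) * norm u)"
  proof (rule sum_mono)
    fix i
    have "\<bar>(H *v u)$i\<bar> = \<bar>\<Sum>j\<in>UNIV. H$i$j * u$j\<bar>" by (simp add: matrix_vector_mult_def)
    also have "\<dots> \<le> (\<Sum>j\<in>UNIV. \<bar>H$i$j * u$j\<bar>)" by (rule sum_abs)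
    also have "\<dots> \<le> (\<Sum>j\<in>UNIV. \<bar>H$i$j\<bar> * norm u)"
      by (rule sum_mono) (simp add: abs_mult mult_left_mono component_le_norm_cart)
    finally show "\<bar>(H *v u)$i\<bar> \<le> (\<Sum>j\<in>UNIV. \<bar>H$i$j\<bar>) * norm u" by (simp add: sum_distrib_right)
  qed
  also have "\<dots> = (\<Sum>i\<in>UNIV. \<Sum>j\<in>UNIV. \<bar>H$i$j\<bar>) * norm u" by (simp add: sum_distrib_right)
  finally show ?thesis .
qed

locale bnqn_loc =
  fixes f :: "real^'m::finite \<Rightarrow> real" and \<delta> :: "nat \<Rightarrow> real" and \<tau> \<gamma>0 :: real
    and x :: "nat \<Rightarrow> real^'m" and e :: "nat \<Rightarrow> 'm \<Rightarrow> real^'m"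
  assumes C3: "C3 f"
    and loj_crit: "\<And>p. grad f p = 0 \<Longrightarrow> lojasiewicz_at f p"
    and delta_distinct: "inj_on \<delta> {0..CARD('m)}"
    and tau_pos: "0 < \<tau>"
    and gamma0: "0 < \<gamma>0"
    and seq: "\<And>k. x (Suc k) = bnqn_step \<delta> \<tau> \<gamma>0 f (x k)"
    and e_orthonormal: "\<And>k i i'. grad f (x k) \<noteq> 0 \<Longrightarrow>
           e k i \<bullet> e k i' = (if i = i' then 1 else 0)"
    and e_eigen: "\<And>k i. grad f (x k) \<noteq> 0 \<Longrightarrow>
           \<exists>l. bnqn_A \<delta> \<tau> f (x k) *v e k i = l *\<^sub>R e k i"
    and ratio: "\<And>r p. strict_mono r \<Longrightarrow> (\<lambda>n. x (r n)) \<longlonglongrightarrow> p \<Longrightarrow>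
           Liminf sequentially (\<lambda>n. ereal
             (Min ((\<lambda>i. norm (bnqn_A \<delta> \<tau> f (x (r n)) *v e (r n) i))
                     ` {i. grad f (x (r n)) \<bullet> e (r n) i \<noteq> 0}) /
              Max ((\<lambda>i. norm (bnqn_A \<delta> \<tau> f (x (r n)) *v e (r n) i))
                     ` {i. grad f (x (r n)) \<bullet> e (r n) i \<noteq> 0}))) > 0"
begin

definition "g k = grad f (x k)"
definition "A k = bnqn_A \<delta> \<tau> f (x k)"
definition "lam k i = (SOME l. A k *v e k i = l *\<^sub>R e k i)"
definition "wv k = bnqn_w \<delta> \<tau> f (x k)"
definition "wh k = bnqn_what \<delta> \<tau> f (x k)"
definition "gam k = bnqn_gamma \<delta> \<tau> \<gamma>0 f (x k)"
definition "kap = bnqn_kappa \<delta> CARD('m)"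
definition "rat k = Min ((\<lambda>i. norm (A k *v e k i)) ` {i. g k \<bullet> e k i \<noteq> 0}) /
              Max ((\<lambda>i. norm (A k *v e k i)) ` {i. g k \<bullet> e k i \<noteq> 0})"

lemma C1f: "C1 f" using C3 by (rule C3_C1)

lemma kap_pos: "0 < kap"
  unfolding kap_def by (rule kappa_pos[OF delta_distinct]) (simp add: Suc_le_eq)

lemma orth: "g k \<noteq> 0 \<Longrightarrow> e k i \<bullet> e k i' = (if i = i' then 1 else 0)"
  using e_orthonormal by (simp add: g_def)

lemma eig: "g k \<noteq> 0 \<Longrightarrow> A k *v e k i = lam k i *\<^sub>R e k i"
  unfolding lam_def A_def using e_eigen[of k i] by (simp add: g_def) (rule someI_ex)

lemma lam_lb: "g k \<noteq> 0 \<Longrightarrow> kap * norm (g k) powr \<tau> \<le> \<bar>lam k i\<bar>"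
  using bnqn_eig(2)[OF delta_distinct _ orth eig[unfolded A_def]] by (simp add: kap_def g_def)

lemma j_le: "g k \<noteq> 0 \<Longrightarrow> bnqn_j \<delta> \<tau> f (x k) \<le> CARD('m)"
  using bnqn_eig(1)[OF delta_distinct _ orth eig[unfolded A_def]] by (simp add: g_def)

lemma lam_pos: assumes gk: "g k \<noteq> 0" shows "0 < \<bar>lam k i\<bar>"
proof -
  have "0 < kap * norm (g k) powr \<tau>" using kap_pos gk by simp
  thus ?thesis using lam_lb[OF gk, of i] by linarith
qed

lemma lam_nz: "g k \<noteq> 0 \<Longrightarrow> lam k i \<noteq> 0"
  using lam_pos by fastforce

lemma norm_Ae: "g k \<noteq> 0 \<Longrightarrow> norm (A k *v e k i) = \<bar>lam k i\<bar>"
  using eig[of k i] orth[of k i i] by (simp add: norm_eq_sqrt_inner)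

lemma wv_eq: assumes gk: "g k \<noteq> 0" shows "wv k = (\<Sum>i\<in>UNIV. (g k \<bullet> e k i / \<bar>lam k i\<bar>) *\<^sub>R e k i)"
proof -
  have o: "\<And>i i'. e k i \<bullet> e k i' = (if i = i' then 1 else 0)" using orth[OF gk] .
  have ei: "\<And>i. bnqn_A \<delta> \<tau> f (x k) *v e k i = lam k i *\<^sub>R e k i" using eig[OF gk] by (simp add: A_def)
  have nz: "\<And>i. lam k i \<noteq> 0" using lam_nz[OF gk] .
  show ?thesis unfolding wv_def bnqn_w_def Let_def
    using spectral_w[OF o ei nz, where g="g k"] by (simp add: g_def)
qed

lemma wh_eq: "wh k = (1 / max 1 (norm (wv k))) *\<^sub>R wv k"
  by (simp add: wh_def wv_def bnqn_what_def Let_def)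

lemma wh_norm: "norm (wh k) \<le> 1"
  by (simp add: wh_eq field_simps)

lemma wh_g: "wh k \<bullet> g k = (wv k \<bullet> g k) / max 1 (norm (wv k))"
  by (simp add: wh_eq)

lemma wv_g_lb: 
  assumes "g k \<noteq> 0" "0 < M" "\<And>i. g k \<bullet> e k i \<noteq> 0 \<Longrightarrow> \<bar>lam k i\<bar> \<le> M"
  shows "norm (g k) ^ 2 / M \<le> wv k \<bullet> g k"
proof -
  have o: "\<And>i i'. e k i \<bullet> e k i' = (if i = i' then 1 else 0)" using orth[OF assms(1)] .
  have nz: "\<And>i. lam k i \<noteq> 0" using lam_nz[OF assms(1)] .
  show ?thesis using orth_bounds(1)[OF o nz, where g="g k" and M=M] assms by (simp add: wv_eq)
qed

lemma wv_norm_ub: 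
  assumes "g k \<noteq> 0" "0 < L" "\<And>i. g k \<bullet> e k i \<noteq> 0 \<Longrightarrow> L \<le> \<bar>lam k i\<bar>"
  shows "norm (wv k) \<le> norm (g k) / L"
proof -
  have o: "\<And>i i'. e k i \<bullet> e k i' = (if i = i' then 1 else 0)" using orth[OF assms(1)] .
  have nz: "\<And>i. lam k i \<noteq> 0" using lam_nz[OF assms(1)] .
  show ?thesis using orth_bounds(2)[OF o nz, where g="g k" and L=L] assms by (simp add: wv_eq)
qed

lemma wh_g_pos: assumes "g k \<noteq> 0" shows "0 < wh k \<bullet> g k"
proof -
  define M where "M = Max (range (\<lambda>i. \<bar>lam k i\<bar>))"
  have M: "0 < M" unfolding M_def using lam_pos[OF assms] by (simp add: Max_gr_iff)
  have "norm (g k) ^ 2 / M \<le> wv k \<bullet> g k"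
    by (rule wv_g_lb[OF assms M]) (auto simp: M_def)
  moreover have "0 < norm (g k) ^ 2 / M" using assms M by simp
  ultimately show ?thesis by (simp add: wh_g)
qed

lemma step0: "g k = 0 \<Longrightarrow> x (Suc k) = x k"
  by (simp add: seq bnqn_step_def g_def)

lemma step1: "g k \<noteq> 0 \<Longrightarrow> x (Suc k) = x k - gam k *\<^sub>R wh k"
  by (simp add: seq bnqn_step_def g_def gam_def wh_def)

lemma armijo_gen:
  assumes gk: "g k \<noteq> 0" and r: "0 < r"
    and eps: "\<And>y. y \<in> cball (x k) r \<Longrightarrow> norm (grad f y - g k) \<le> wh k \<bullet> g k / 2"
    and N: "\<gamma>0 * (1/3)^N \<le> r"
  shows "\<gamma>0 * (1/3)^N \<le> gam k" and "f (x (Suc k)) - f (x k) \<le> - gam k * (wh k \<bullet> g k) / 3"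
    and "0 < gam k"
proof -
  have arm: "f (x k - \<gamma> *\<^sub>R bnqn_what \<delta> \<tau> f (x k)) - f (x k)
        \<le> - \<gamma> * (bnqn_what \<delta> \<tau> f (x k) \<bullet> grad f (x k)) / 3" if "0 < \<gamma>" "\<gamma> \<le> r" for \<gamma>
  proof -
    have "f (x k - \<gamma> *\<^sub>R wh k) - f (x k) \<le> - \<gamma> * (wh k \<bullet> g k) + \<gamma> * (wh k \<bullet> g k / 2)"
      using armijo_mvt[OF C1f, of "x k" r "wh k \<bullet> g k / 2" "wh k" \<gamma>] eps wh_norm that
      by (simp add: g_def)
    also have "\<dots> \<le> - \<gamma> * (wh k \<bullet> g k) / 3" using wh_g_pos[OF gk] that by simp
    finally show ?thesis by (simp add: wh_def g_def)
  qed
  note gp = gamma_props[OF gamma0 N arm]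
  show "\<gamma>0 * (1/3)^N \<le> gam k" using gp(1) by (simp add: gam_def)
  show "f (x (Suc k)) - f (x k) \<le> - gam k * (wh k \<bullet> g k) / 3"
    using gp(2) by (simp add: step1[OF gk] gam_def wh_def g_def)
  show "0 < gam k" using gp(3) by (simp add: gam_def)
qed

lemma armijo:
  assumes gk: "g k \<noteq> 0"
  shows "f (x (Suc k)) - f (x k) \<le> - gam k * (wh k \<bullet> g k) / 3" and "0 < gam k"
proof -
  have c: "0 < wh k \<bullet> g k / 2" using wh_g_pos[OF gk] by simp
  have "continuous (at (x k)) (grad f)"
    using C1_grad_cont[OF C1f] by (simp add: continuous_on_eq_continuous_at)
  then obtain d where d: "0 < d" "\<And>y. dist y (x k) < d \<Longrightarrow> dist (grad f y) (grad f (x k)) < wh k \<bullet> g k / 2"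
    using c unfolding continuous_at_eps_delta by blast
  have eps: "norm (grad f y - g k) \<le> wh k \<bullet> g k / 2" if "y \<in> cball (x k) (d/2)" for y
    using d(2)[of y] that d(1) by (simp add: dist_norm g_def norm_minus_commute)
  obtain N where N: "\<gamma>0 * (1/3::real)^N \<le> d/2" using exists_N[of "d/2" \<gamma>0] d gamma0 by auto
  show "f (x (Suc k)) - f (x k) \<le> - gam k * (wh k \<bullet> g k) / 3" "0 < gam k"
    using armijo_gen[OF gk _ eps N] d(1) by auto
qed

lemma fdec: "f (x (Suc k)) \<le> f (x k)"
proof (cases "g k = 0")
  case True thus ?thesis by (simp add: step0)
next
  case False
  have "0 < gam k * (wh k \<bullet> g k)" using armijo(2)[OF False] wh_g_pos[OF False] by simp
  thus ?thesis using armijo(1)[OF False] by linarith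
qed

lemma fdec_le: "i \<le> j \<Longrightarrow> f (x j) \<le> f (x i)"
  using decseq_SucI[of "\<lambda>k. f (x k)"] fdec by (simp add: decseq_def)

lemma f_lower:
  assumes r: "strict_mono r" and lim: "(\<lambda>n. x (r n)) \<longlonglongrightarrow> p"
  shows "f p \<le> f (x k)"
proof -
  have "isCont f p" using C1_cont[OF C1f] by (simp add: continuous_on_eq_continuous_at)
  hence "(\<lambda>n. f (x (r n))) \<longlonglongrightarrow> f p" by (rule isCont_tendsto_compose[OF _ lim])
  moreover have "eventually (\<lambda>n. f (x (r n)) \<le> f (x k)) sequentially"
  proof (rule eventually_sequentiallyI[of k])
    fix n assume "k \<le> n"
    hence "k \<le> r n" using seq_suble[OF r, of n] by linarith
    thus "f (x (r n)) \<le> f (x k)" by (rule fdec_le)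
  qed
  ultimately show ?thesis by (rule tendsto_le[OF trivial_limit_sequentially tendsto_const])
qed

end


context bnqn_loc begin

definition "HS y = (\<Sum>i\<in>UNIV. \<Sum>j\<in>UNIV. \<bar>hess f y $ i $ j\<bar>)"
definition "Dm = (\<Sum>j\<in>{0..CARD('m)}. \<bar>\<delta> j\<bar>)"

lemma HS_nn: "0 \<le> HS y" by (simp add: HS_def sum_nonneg)
lemma Dm_nn: "0 \<le> Dm" by (simp add: Dm_def sum_nonneg)

lemma HS_cont: "continuous_on UNIV HS"
  unfolding HS_def[abs_def] by (intro continuous_on_sum continuous_on_rabs ballI C3_hess_cont[OF C3])

lemma lam_ub:
  assumes gk: "g k \<noteq> 0"
  shows "\<bar>lam k i\<bar> \<le> HS (x k) + Dm * norm (g k) powr \<tau>"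
proof -
  define j0 where "j0 = bnqn_j \<delta> \<tau> f (x k)"
  define c0 where "c0 = \<delta> j0 * norm (g k) powr \<tau>"
  have Ak: "A k = hess f (x k) + c0 *\<^sub>R mat 1" by (simp add: A_def bnqn_A_def c0_def j0_def g_def)
  have ne: "norm (e k i) = 1" using orth[OF gk, of i i] by (simp add: norm_eq_sqrt_inner)
  have "\<bar>lam k i\<bar> = norm (hess f (x k) *v e k i + c0 *\<^sub>R e k i)"
    using norm_Ae[OF gk, of i] by (simp add: Ak shift_mul)
  also have "\<dots> \<le> norm (hess f (x k) *v e k i) + norm (c0 *\<^sub>R e k i)" by (rule norm_triangle_ineq)
  also have "\<dots> \<le> HS (x k) + \<bar>c0\<bar>"
    using hess_bound[of "hess f (x k)" "e k i"] ne by (simp add: HS_def)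
  also have "\<bar>c0\<bar> \<le> Dm * norm (g k) powr \<tau>"
  proof -
    have "\<bar>\<delta> j0\<bar> \<le> Dm" unfolding Dm_def
      by (rule member_le_sum) (use j_le[OF gk] in \<open>auto simp: j0_def\<close>)
    thus ?thesis by (simp add: c0_def abs_mult mult_right_mono)
  qed
  finally show ?thesis by simp
qed

lemma noncrit:
  assumes r: "strict_mono r" and lim: "(\<lambda>n. x (r n)) \<longlonglongrightarrow> p"
  shows "grad f p = 0"
proof (rule ccontr)
  assume gp: "grad f p \<noteq> 0"
  define a where "a = norm (grad f p) / 2"
  define b where "b = 3 * a"
  have a: "0 < a" using gp by (simp add: a_def)
  have cg: "continuous (at p) (\<lambda>y. norm (grad f y))"
    using C1_grad_cont[OF C1f] by (intro continuous_intros) (simp add: continuous_on_eq_continuous_at)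
  have ch: "continuous (at p) HS" using HS_cont by (simp add: continuous_on_eq_continuous_at)
  obtain d1 where d1: "0 < d1" "\<And>y. dist y p < d1 \<Longrightarrow> dist (norm (grad f y)) (norm (grad f p)) < a"
    using cg a unfolding continuous_at_eps_delta by blast
  obtain d2 where d2: "0 < d2" "\<And>y. dist y p < d2 \<Longrightarrow> dist (HS y) (HS p) < 1"
    using ch unfolding continuous_at_eps_delta by (meson zero_less_one)
  define M where "M = HS p + 1 + Dm * b powr \<tau>"
  have M: "0 < M" unfolding M_def using HS_nn[of p] Dm_nn by (simp add: add_pos_nonneg)
  define L where "L = kap * a powr \<tau>"
  have L: "0 < L" unfolding L_def using kap_pos a by simp
  define c where "c = (a^2 / M) / max 1 (b / L)"
  have c: "0 < c" unfolding c_def using a M by simp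
  have "uniformly_continuous_on (cball p 1) (grad f)"
    by (rule compact_uniformly_continuous) (auto intro: continuous_on_subset[OF C1_grad_cont[OF C1f]])
  then obtain d3 where d3: "0 < d3" "\<And>y z. y \<in> cball p 1 \<Longrightarrow> z \<in> cball p 1 \<Longrightarrow> dist y z < d3 \<Longrightarrow> dist (grad f y) (grad f z) < c/2"
    unfolding uniformly_continuous_on_def using c by (metis half_gt_zero)
  define \<rho> where "\<rho> = min (min d1 d2) (1/2)"
  have \<rho>: "0 < \<rho>" using d1 d2 by (simp add: \<rho>_def)
  define rr where "rr = min (d3/2) (1/2)"
  have rr: "0 < rr" using d3 by (simp add: rr_def)
  obtain N where N: "\<gamma>0 * (1/3::real)^N \<le> rr" using exists_N[OF rr gamma0] by auto
  define D where "D = \<gamma>0 * (1/3::real)^N * c / 3"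
  have D: "0 < D" using gamma0 c by (simp add: D_def)
  have key: "f (x (Suc k)) \<le> f (x k) - D" if xk: "dist (x k) p < \<rho>" for k
  proof -
    have "dist (norm (grad f (x k))) (norm (grad f p)) < a" using d1(2)[of "x k"] xk by (simp add: \<rho>_def)
    hence "norm (grad f p) - a < norm (g k)" "norm (g k) < norm (grad f p) + a"
      by (auto simp: g_def dist_real_def abs_less_iff)
    hence ng: "a < norm (g k)" "norm (g k) < b" using a_def b_def by linarith+
    hence gk: "g k \<noteq> 0" using a by auto
    have hs: "HS (x k) < HS p + 1" using d2(2)[of "x k"] xk by (auto simp: \<rho>_def dist_real_def abs_less_iff)
    have pw: "norm (g k) powr \<tau> \<le> b powr \<tau>" using ng a tau_pos by (intro powr_mono2) auto
    have pw2: "a powr \<tau> \<le> norm (g k) powr \<tau>" using ng a tau_pos by (intro powr_mono2) auto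
    have lamub: "\<bar>lam k i\<bar> \<le> M" for i
    proof -
      have "Dm * norm (g k) powr \<tau> \<le> Dm * b powr \<tau>" using pw Dm_nn by (rule mult_left_mono)
      thus ?thesis using lam_ub[OF gk, of i] hs by (simp add: M_def)
    qed
    have lamlb: "L \<le> \<bar>lam k i\<bar>" for i
    proof -
      have "kap * a powr \<tau> \<le> kap * norm (g k) powr \<tau>" using pw2 kap_pos by (simp add: mult_left_mono)
      thus ?thesis using lam_lb[OF gk, of i] by (simp add: L_def)
    qed
    have "a^2 / M \<le> norm (g k) ^ 2 / M" using ng a M by (intro divide_right_mono power_mono) auto
    also have "\<dots> \<le> wv k \<bullet> g k" using wv_g_lb[OF gk M] lamub by blast
    finally have wvg: "a^2 / M \<le> wv k \<bullet> g k" .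
    have "norm (wv k) \<le> norm (g k) / L" using wv_norm_ub[OF gk L] lamlb by blast
    also have "\<dots> \<le> b / L" using ng L by (simp add: divide_right_mono)
    finally have wvn: "norm (wv k) \<le> b / L" .
    have a2M: "0 < a^2 / M" using a M by simp
    have wvg0: "0 \<le> wv k \<bullet> g k" using wvg a2M by linarith
    have whg: "c \<le> wh k \<bullet> g k"
      unfolding wh_g c_def
      by (rule frac_le) (use wvg wvn wvg0 in \<open>auto simp: max_def\<close>)
    have eps: "norm (grad f y - g k) \<le> wh k \<bullet> g k / 2" if y: "y \<in> cball (x k) rr" for y
    proof -
      have "dist y p \<le> dist y (x k) + dist (x k) p" by (rule dist_triangle)
      hence yp: "y \<in> cball p 1" using y xk by (auto simp: rr_def \<rho>_def dist_commute)
      have xp: "x k \<in> cball p 1" using xk by (auto simp: \<rho>_def dist_commute)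
      have "dist y (x k) < d3" using y d3 by (auto simp: rr_def dist_commute)
      hence "dist (grad f y) (grad f (x k)) < c/2" using d3(2) yp xp by blast
      thus ?thesis using whg by (simp add: dist_norm g_def)
    qed
    note ag = armijo_gen[OF gk rr eps N]
    have "\<gamma>0 * (1/3)^N * c \<le> gam k * (wh k \<bullet> g k)"
      using ag(1) ag(3) whg c gamma0 by (intro mult_mono) auto
    thus ?thesis using ag(2) by (simp add: D_def)
  qed
  obtain n0 where n0: "\<And>n. n \<ge> n0 \<Longrightarrow> dist (x (r n)) p < \<rho>"
    using lim \<rho> unfolding lim_sequentially by blast
  have iter: "f (x (r (n0 + n))) \<le> f (x (r n0)) - real n * D" for n
  proof (induction n)
    case 0 thus ?case by simp
  next
    case (Suc n)
    have "Suc (r (n0 + n)) \<le> r (n0 + Suc n)" using r by (simp add: strict_mono_def Suc_le_eq)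
    hence "f (x (r (n0 + Suc n))) \<le> f (x (Suc (r (n0 + n))))" by (rule fdec_le)
    also have "\<dots> \<le> f (x (r (n0 + n))) - D" by (rule key[OF n0]) simp
    finally show ?case using Suc by (simp add: algebra_simps)
  qed
  obtain n where "f (x (r n0)) - f p < real n * D" using D ex_less_of_nat_mult by blast
  thus False using iter[of n] f_lower[OF r lim, of "r (n0 + n)"] by linarith
qed

end


primrec pick :: "(nat \<Rightarrow> nat \<Rightarrow> bool) \<Rightarrow> nat \<Rightarrow> nat" where
  "pick P 0 = (SOME k. P 0 k)"
| "pick P (Suc n) = (SOME k. pick P n < k \<and> P (Suc n) k)"

lemma pick_props:
  assumes ex: "\<And>n K. \<exists>k\<ge>K. P n k"
  shows "strict_mono (pick P)" and "\<And>n. P n (pick P n)"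
proof -
  have both: "P n (pick P n) \<and> pick P n < pick P (Suc n) \<and> P (Suc n) (pick P (Suc n))" for n
  proof -
    have "\<exists>k. pick P n < k \<and> P (Suc n) k" using ex[where n="Suc n" and K="Suc (pick P n)"] by (auto simp: Suc_le_eq)
    hence s: "pick P n < pick P (Suc n) \<and> P (Suc n) (pick P (Suc n))" by (simp, rule someI_ex)
    have "P n (pick P n)"
    proof (cases n)
      case 0
      have "\<exists>k. P 0 k" using ex[where n=0 and K=0] by auto
      hence "P 0 (pick P 0)" by (simp add: someI_ex)
      thus ?thesis using 0 by simp
    next
      case (Suc m)
      have "\<exists>k. pick P m < k \<and> P (Suc m) k" using ex[where n="Suc m" and K="Suc (pick P m)"] by (auto simp: Suc_le_eq)
      hence "pick P m < pick P (Suc m) \<and> P (Suc m) (pick P (Suc m))" by (simp, rule someI_ex)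
      thus ?thesis using Suc by simp
    qed
    thus ?thesis using s by simp
  qed
  show "strict_mono (pick P)" using both by (simp add: strict_mono_Suc_iff)
  show "\<And>n. P n (pick P n)" using both by simp
qed

context bnqn_loc begin

lemma angle:
  assumes gk: "g k \<noteq> 0" and \<rho>: "0 < \<rho>" "\<rho> \<le> rat k"
  shows "\<rho> * norm (wh k) * norm (g k) \<le> wh k \<bullet> g k"
proof -
  define \<Lambda> where "\<Lambda> = {i. g k \<bullet> e k i \<noteq> 0}"
  define S where "S = (\<lambda>i. norm (A k *v e k i)) ` \<Lambda>"
  have S: "S = (\<lambda>i. \<bar>lam k i\<bar>) ` \<Lambda>" unfolding S_def using norm_Ae[OF gk] by simp
  have "\<Lambda> \<noteq> {}"
  proof
    assume "\<Lambda> = {}"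
    hence "\<forall>i. g k \<bullet> e k i = 0" by (auto simp: \<Lambda>_def)
    hence "g k = 0" using orth_expand[OF orth[OF gk], of "g k"] by simp
    thus False using gk by simp
  qed
  hence Sne: "S \<noteq> {}" and Sfin: "finite S" by (auto simp: S)
  define Lmin where "Lmin = Min S"
  define Lmax where "Lmax = Max S"
  have Lmin: "0 < Lmin" unfolding Lmin_def using Sne Sfin lam_pos[OF gk] by (auto simp: S Min_gr_iff)
  have lmin: "\<And>i. g k \<bullet> e k i \<noteq> 0 \<Longrightarrow> Lmin \<le> \<bar>lam k i\<bar>" unfolding Lmin_def using Sfin by (auto simp: S \<Lambda>_def)
  have lmax: "\<And>i. g k \<bullet> e k i \<noteq> 0 \<Longrightarrow> \<bar>lam k i\<bar> \<le> Lmax" unfolding Lmax_def using Sfin by (auto simp: S \<Lambda>_def)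
  have Lmm: "Lmin \<le> Lmax" unfolding Lmin_def Lmax_def using Sne Sfin by (meson Max_ge Min_le ex_in_conv order_trans)
  have Lmax: "0 < Lmax" using Lmin Lmm by simp
  have r: "rat k = Lmin / Lmax" by (simp add: rat_def Lmin_def Lmax_def S_def \<Lambda>_def)
  have wg: "norm (g k) ^ 2 / Lmax \<le> wv k \<bullet> g k" by (rule wv_g_lb[OF gk Lmax lmax])
  have wn: "norm (wv k) \<le> norm (g k) / Lmin" by (rule wv_norm_ub[OF gk Lmin lmin])
  have "\<rho> * norm (wv k) * norm (g k) \<le> (Lmin / Lmax) * (norm (g k) / Lmin) * norm (g k)"
    using \<rho> r wn Lmax Lmin by (intro mult_mono) auto
  also have "\<dots> = norm (g k) ^ 2 / Lmax" using Lmin by (simp add: power2_eq_square)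
  finally have a: "\<rho> * norm (wv k) * norm (g k) \<le> wv k \<bullet> g k" using wg by linarith
  define t where "t = 1 / max 1 (norm (wv k))"
  have t: "0 < t" by (simp add: t_def)
  have "\<rho> * norm (wh k) * norm (g k) = t * (\<rho> * norm (wv k) * norm (g k))"
    using t by (simp add: wh_eq t_def[symmetric])
  also have "\<dots> \<le> t * (wv k \<bullet> g k)" using a t by simp
  also have "\<dots> = wh k \<bullet> g k" by (simp add: wh_eq t_def)
  finally show ?thesis .
qed

lemma angle_nbhd:
  assumes r: "strict_mono r" and lim: "(\<lambda>n. x (r n)) \<longlonglongrightarrow> p"
  shows "\<exists>R>0. \<exists>\<rho>>0. \<exists>K. \<forall>k\<ge>K. dist (x k) p < R \<longrightarrow> g k \<noteq> 0 \<longrightarrow> \<rho> \<le> rat k"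
proof (rule ccontr)
  assume "\<not> ?thesis"
  hence neg: "\<And>R \<rho> K. 0 < R \<Longrightarrow> 0 < \<rho> \<Longrightarrow> \<exists>k\<ge>K. dist (x k) p < R \<and> g k \<noteq> 0 \<and> rat k < \<rho>"
    by (meson not_le)
  define P where "P n k \<longleftrightarrow> dist (x k) p < inverse (real (Suc n)) \<and> g k \<noteq> 0 \<and> rat k < inverse (real (Suc n))" for n k
  have ex: "\<exists>k\<ge>K. P n k" for n K unfolding P_def by (rule neg) auto
  define q where "q = pick P"
  have q: "strict_mono q" "\<And>n. P n (q n)" using pick_props[OF ex] by (auto simp: q_def)
  have qlim: "(\<lambda>n. x (q n)) \<longlonglongrightarrow> p"
  proof (rule metric_LIMSEQ_I)
    fix \<epsilon> :: real assume \<epsilon>: "0 < \<epsilon>"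
    obtain N where N: "inverse (real (Suc N)) < \<epsilon>" using reals_Archimedean[OF \<epsilon>] by blast
    have "dist (x (q n)) p < \<epsilon>" if "N \<le> n" for n
    proof -
      have "inverse (real (Suc n)) \<le> inverse (real (Suc N))" using that by (simp add: field_simps)
      moreover have "dist (x (q n)) p < inverse (real (Suc n))" using q(2)[of n] unfolding P_def by blast
      ultimately show ?thesis using N by linarith
    qed
    thus "\<exists>no. \<forall>n\<ge>no. dist (x (q n)) p < \<epsilon>" by blast
  qed
  have "Liminf sequentially (\<lambda>n. ereal (rat (q n))) > 0"
    using ratio[OF q(1) qlim] by (simp add: rat_def A_def g_def)
  moreover have "Liminf sequentially (\<lambda>n. ereal (rat (q n))) \<le> Liminf sequentially (\<lambda>n. ereal (inverse (real (Suc n))))"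
    by (rule Liminf_mono) (use q(2) in \<open>auto simp: P_def less_imp_le\<close>)
  moreover have "Liminf sequentially (\<lambda>n. ereal (inverse (real (Suc n)))) = ereal 0"
    using tendsto_ereal[OF LIMSEQ_inverse_real_of_nat] by (intro lim_imp_Liminf) auto
  ultimately have "(0::ereal) < ereal 0" by (metis order_less_le_trans)
  thus False by simp
qed

lemma f_lim:
  assumes lim: "(\<lambda>n. x (r n)) \<longlonglongrightarrow> p"
  shows "(\<lambda>n. f (x (r n))) \<longlonglongrightarrow> f p"
proof -
  have "isCont f p" using C1_cont[OF C1f] by (simp add: continuous_on_eq_continuous_at)
  thus ?thesis by (rule isCont_tendsto_compose[OF _ lim])
qed

end


context bnqn_loc begin

lemma crit:
  assumes r: "strict_mono r" and lim: "(\<lambda>n. x (r n)) \<longlonglongrightarrow> p" and gp: "grad f p = 0"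
  shows "x \<longlonglongrightarrow> p"
proof -
  obtain U \<mu> C where U: "open U" "p \<in> U" and \<mu>: "0 < \<mu>" "\<mu> < 1" and C: "0 < C"
    and loj: "\<And>y. y \<in> U \<Longrightarrow> \<bar>f y - f p\<bar> powr \<mu> \<le> C * norm (grad f y)"
    using loj_crit[OF gp] unfolding lojasiewicz_at_def by blast
  obtain R0 where R0: "0 < R0" "ball p R0 \<subseteq> U" using U openE by blast
  obtain R \<rho> K1 where R: "0 < R" and \<rho>: "0 < \<rho>"
    and K1: "\<And>k. K1 \<le> k \<Longrightarrow> dist (x k) p < R \<Longrightarrow> g k \<noteq> 0 \<Longrightarrow> \<rho> \<le> rat k"
    using angle_nbhd[OF r lim] by blast
  define R' where "R' = min R0 R"
  have R': "0 < R'" using R0 R by (simp add: R'_def)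
  define V where "V k = f (x k) - f p" for k
  have Vnn: "0 \<le> V k" for k using f_lower[OF r lim] by (simp add: V_def)
  have Vdec: "V (Suc k) \<le> V k" for k using fdec by (simp add: V_def)
  define \<phi> where "\<phi> t = t powr (1 - \<mu>)" for t
  have phimono: "\<phi> s \<le> \<phi> t" if "0 \<le> s" "s \<le> t" for s t
    unfolding \<phi>_def using that \<mu> by (intro powr_mono2) auto
  have phinn: "0 \<le> \<phi> s" for s by (simp add: \<phi>_def)
  define c' where "c' = 3 * C / ((1 - \<mu>) * \<rho>)"
  have c': "0 < c'" using C \<mu> \<rho> by (simp add: c'_def)
  have step: "norm (x (Suc k) - x k) \<le> c' * (\<phi> (V k) - \<phi> (V (Suc k)))"
    if k: "K1 \<le> k" "dist (x k) p < R'" for k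
  proof (cases "g k = 0")
    case True
    have "0 \<le> \<phi> (V k) - \<phi> (V (Suc k))" using phimono[OF Vnn Vdec] by simp
    thus ?thesis using True c' by (simp add: step0)
  next
    case False
    note gk = False
    have rk: "\<rho> \<le> rat k" using K1[OF k(1) _ gk] k(2) by (simp add: R'_def)
    have ang: "\<rho> * norm (wh k) * norm (g k) \<le> wh k \<bullet> g k" by (rule angle[OF gk \<rho> rk])
    note arm = armijo[OF gk]
    define \<Delta> where "\<Delta> = norm (x (Suc k) - x k)"
    have \<Delta>: "\<Delta> = gam k * norm (wh k)" using arm(2) by (simp add: \<Delta>_def step1[OF gk])
    define G where "G = norm (g k)"
    have G: "0 < G" using gk by (simp add: G_def)
    have dec: "\<rho> / 3 * \<Delta> * G \<le> V k - V (Suc k)"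
    proof -
      have "\<rho> / 3 * \<Delta> * G = gam k * (\<rho> * norm (wh k) * norm (g k)) / 3" by (simp add: \<Delta> G_def)
      also have "\<dots> \<le> gam k * (wh k \<bullet> g k) / 3" using ang arm(2) by (simp add: mult_left_mono)
      also have "\<dots> \<le> V k - V (Suc k)" using arm(1) by (simp add: V_def)
      finally show ?thesis .
    qed
    have \<Delta>0: "0 \<le> \<Delta>" by (simp add: \<Delta>_def)
    show ?thesis
    proof (cases "V k = 0")
      case True
      hence "V (Suc k) = 0" using Vnn[of "Suc k"] Vdec[of k] by simp
      hence "\<rho> / 3 * \<Delta> * G \<le> 0" using dec True by simp
      hence "\<Delta> \<le> 0" using \<rho> G by (simp add: mult_le_0_iff zero_less_mult_iff)
      thus ?thesis using \<Delta>0 True \<open>V (Suc k) = 0\<close> by (simp add: \<Delta>_def)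
    next
      case False
      hence Vp: "0 < V k" using Vnn[of k] by simp
      have "x k \<in> U" using k(2) R0 by (auto simp: R'_def dist_commute)
      hence lo: "V k powr \<mu> \<le> C * G" using loj[of "x k"] Vnn[of k] by (simp add: V_def G_def g_def)
      have conc: "(1 - \<mu>) * (V k - V (Suc k)) / V k powr \<mu> \<le> \<phi> (V k) - \<phi> (V (Suc k))"
        using powr_diff_ge[OF Vnn[of "Suc k"] Vdec[of k] Vp, of "1 - \<mu>"] \<mu> by (simp add: \<phi>_def)
      have num: "0 \<le> (1 - \<mu>) * (V k - V (Suc k))" using Vdec[of k] \<mu> by simp
      have pp: "0 < V k powr \<mu>" using Vp by simp
      have e2: "(1 - \<mu>) * (V k - V (Suc k)) / (C * G) \<le> (1 - \<mu>) * (V k - V (Suc k)) / V k powr \<mu>"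
        using num pp lo C G by (intro divide_left_mono) auto
      have e3: "(1 - \<mu>) * (\<rho> / 3 * \<Delta> * G) / (C * G) \<le> (1 - \<mu>) * (V k - V (Suc k)) / (C * G)"
        using dec \<mu> C G by (intro divide_right_mono mult_left_mono) auto
      have e4: "(1 - \<mu>) * (\<rho> / 3 * \<Delta> * G) / (C * G) = \<Delta> / c'"
        using C G \<mu> \<rho> by (simp add: c'_def field_simps)
      have "\<Delta> / c' \<le> \<phi> (V k) - \<phi> (V (Suc k))" using e2 e3 e4 conc by linarith
      thus ?thesis using c' by (simp add: \<Delta>_def divide_le_eq mult.commute)
    qed
  qed
  have t1: "(\<lambda>n. dist (x (r n)) p) \<longlonglongrightarrow> 0"
    using tendsto_dist[OF lim tendsto_const[of p]] by simp
  have t2: "(\<lambda>n. V (r n)) \<longlonglongrightarrow> 0"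
    using tendsto_diff[OF f_lim[OF lim] tendsto_const[of "f p"]] by (simp add: V_def)
  have t3: "(\<lambda>n. \<phi> (V (r n))) \<longlonglongrightarrow> 0"
    unfolding \<phi>_def by (rule tendsto_zero_powrI[OF t2 tendsto_const]) (use Vnn \<mu> in auto)
  have "(\<lambda>n. dist (x (r n)) p + c' * \<phi> (V (r n))) \<longlonglongrightarrow> 0 + c' * 0"
    by (intro tendsto_add tendsto_mult t1 t3 tendsto_const)
  hence ev1: "eventually (\<lambda>n. dist (x (r n)) p + c' * \<phi> (V (r n)) < R') sequentially"
    using R' by (intro order_tendstoD(2)) auto
  have ev2: "eventually (\<lambda>n. K1 \<le> r n) sequentially"
    using eventually_ge_at_top[of K1] by eventually_elim (meson le_trans r seq_suble)
  obtain n where n: "dist (x (r n)) p + c' * \<phi> (V (r n)) < R'" "K1 \<le> r n"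
    using eventually_happens[OF eventually_conj[OF ev1 ev2]] by auto
  have "summable (\<lambda>k. norm (x (Suc k) - x k))"
  proof (rule absil_abstract[where V=V and \<phi>=\<phi> and x=x and p=p and R=R' and c=c' and K="r n"])
    fix k assume "r n \<le> k" "dist (x k) p < R'"
    thus "norm (x (Suc k) - x k) \<le> c' * (\<phi> (V k) - \<phi> (V (Suc k)))"
      using n(2) by (intro step) auto
  qed (use Vnn Vdec phimono phinn n(1) c' in auto)
  hence "convergent x" by (rule summable_diff_convergent)
  then obtain L where L: "x \<longlonglongrightarrow> L" by (auto simp: convergent_def)
  have "(x \<circ> r) \<longlonglongrightarrow> L" by (rule LIMSEQ_subseq_LIMSEQ[OF L r])
  moreover have "(x \<circ> r) \<longlonglongrightarrow> p" using lim by (simp add: o_def)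
  ultimately have "L = p" by (rule LIMSEQ_unique)
  thus ?thesis using L by simp
qed

lemma main:
  "filterlim (\<lambda>k. norm (x k)) at_top sequentially \<or> (\<exists>p. x \<longlonglongrightarrow> p \<and> grad f p = 0)"
proof (cases "filterlim (\<lambda>k. norm (x k)) at_top sequentially")
  case True thus ?thesis by simp
next
  case False
  then obtain Z where "\<not> eventually (\<lambda>k. Z \<le> norm (x k)) sequentially"
    unfolding filterlim_at_top by blast
  hence ex: "\<exists>k\<ge>K. norm (x k) < Z" for K
    unfolding eventually_sequentially by (meson not_le)
  define P where "P (n::nat) k \<longleftrightarrow> norm (x k) < Z" for n k
  have exP: "\<exists>k\<ge>K. P n k" for n K using ex[of K] by (simp add: P_def)
  have q1: "\<And>n. P n (pick P n)" by (rule pick_props(2)[OF exP])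
  have q: "strict_mono (pick P)" "\<And>n. norm (x (pick P n)) < Z"
    using pick_props(1)[OF exP] apply simp
    using q1 by (simp only: P_def)
  have "seq_compact (cball (0::real^'m) Z)" by (rule compact_imp_seq_compact) simp
  moreover have "\<forall>n. (x \<circ> pick P) n \<in> cball 0 Z" using q(2) by (simp add: less_imp_le)
  ultimately obtain l r2 where r2: "strict_mono r2" "((x \<circ> pick P) \<circ> r2) \<longlonglongrightarrow> l"
    by (rule seq_compactE)
  define s where "s = pick P \<circ> r2"
  have s: "strict_mono s" unfolding s_def by (rule strict_mono_o[OF q(1) r2(1)])
  have slim: "(\<lambda>n. x (s n)) \<longlonglongrightarrow> l" using r2(2) by (simp add: s_def o_def)
  have gl: "grad f l = 0" by (rule noncrit[OF s slim])
  have "x \<longlonglongrightarrow> l" by (rule crit[OF s slim gl])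
  thus ?thesis using gl by blast
qed

end

theorem theorem3:
  fixes f :: "real^'m \<Rightarrow> real"
    and \<delta> :: "nat \<Rightarrow> real" and \<tau> \<gamma>0 :: real
    and x :: "nat \<Rightarrow> real^'m"
    and e :: "nat \<Rightarrow> 'm \<Rightarrow> real^'m"
  assumes C3: "C3 f"
    and loj_crit: "\<And>p. grad f p = 0 \<Longrightarrow> lojasiewicz_at f p"
    and delta_distinct: "inj_on \<delta> {0..CARD('m)}"
    and tau: "0 < \<tau>" "\<tau> \<le> 1"
    and gamma0: "0 < \<gamma>0" "\<gamma>0 < 1"
    and seq: "\<And>k. x (Suc k) = bnqn_step \<delta> \<tau> \<gamma>0 f (x k)"
    and e_orthonormal: "\<And>k i i'. grad f (x k) \<noteq> 0 \<Longrightarrow>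
           e k i \<bullet> e k i' = (if i = i' then 1 else 0)"
    and e_eigen: "\<And>k i. grad f (x k) \<noteq> 0 \<Longrightarrow>
           \<exists>l. bnqn_A \<delta> \<tau> f (x k) *v e k i = l *\<^sub>R e k i"
    and ratio: "\<And>r p. strict_mono r \<Longrightarrow> (\<lambda>n. x (r n)) \<longlonglongrightarrow> p \<Longrightarrow>
           Liminf sequentially (\<lambda>n. ereal
             (Min ((\<lambda>i. norm (bnqn_A \<delta> \<tau> f (x (r n)) *v e (r n) i))
                     ` {i. grad f (x (r n)) \<bullet> e (r n) i \<noteq> 0}) /
              Max ((\<lambda>i. norm (bnqn_A \<delta> \<tau> f (x (r n)) *v e (r n) i))
                     ` {i. grad f (x (r n)) \<bullet> e (r n) i \<noteq> 0}))) > 0"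
    and tau1: "\<tau> = 1 \<Longrightarrow> (\<forall>z. lojasiewicz_at (\<lambda>(y, u). grad f y \<bullet> u) z)"
  shows "filterlim (\<lambda>k. norm (x k)) at_top sequentially \<or>
         (\<exists>p. x \<longlonglongrightarrow> p \<and> grad f p = 0)"
proof -
  interpret bnqn_loc f \<delta> \<tau> \<gamma>0 x e
    using C3 loj_crit delta_distinct tau(1) gamma0(1) seq e_orthonormal e_eigen ratio
    by (intro bnqn_loc.intro) auto
  show ?thesis by (rule main)
qed

end
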